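(* In the transactional panorama model with the lenses and metrics described in the context, for any $k\ge 0$: $S(k\text{-LCMB}) \le S(k\text{-LCNB}) \le S(k\text{-GCNB})$ and $I(k\text{-LCMB}) \ge I(k\text{-LCNB}) \ge I(k\text{-GCNB})$.
   Context: A view graph is a DAG on a set $N$ of nodes (source data and views). Write transactions are processed one at a time; write transaction $w^{t_i}$ creates version $G^{t_i}$ with state set $V^{t_i}$ containing, for each node $n_k$, either its computed new result $v_k^{t_i}$, a placeholder $UC_k^{t_i}$ if $w^{t_i}$ updates $n_k$ but has not yet computed it, or its result from the previous version if $n_k$ is not updated. A version is committed once all its new results are computed; at any time there is the committed graph (most recently committed version, no UCs) and the latest graph (version of the most recent write transaction). Read transactions $r^{s_1},\dots,r^{s_m}$ each read the views in the current viewport and return immediately a set $H^{s_i}$ of states (results or UCs); $Time(r^{s_i})$ is its return time. A returned state's timestamp is that of its version. Lenses: $k$-GCNB reads the latest graph if it has at most $k$ UCs in total, otherwise the committed graph. $k$-LCNB reads the more recent of the committed and latest graphs having at most $k$ UCs for the viewport. $k$-LCMB: if reading either the committed or the latest graph preserves monotonicity (no view gets a state with smaller timestamp than previously read), behave like $k$-LCNB; otherwise read the latest graph. Metrics for $R=\{r^{s_1},\dots,r^{s_m}\}$: invisibility $I(R)=\sum_{i=1}^{m-1}|H^{s_i}_{UC}|\,(Time(r^{s_{i+1}})-Time(r^{s_i}))$ where $H^{s_i}_{UC}$ is the set of UCs in $H^{s_i}$; staleness $S(R)=\sum_{i=1}^{m-1}\sum_{v_k^{t_j}\in H^{s_i}_{qr}}\mathbf{1}[v_k^{t_j}\notin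 V^{t_i}]\,(Time(r^{s_{i+1}})-Time(r^{s_i}))$ where $H^{s_i}_{qr}$ is the set of view results in $H^{s_i}$ and $G^{t_i}$ is the latest version before $r^{s_i}$ starts. $S(A)$, $I(A)$ denote these metrics under lens $A$; lenses are compared on the same write transactions, the same order of computing new view results, and the same sequence of read transactions. *)

theory Defs
  imports Complex_Main
begin

text \<open>A state of a node: either a computed result v_k^{t_j} (Res j k) or a
placeholder UC_k^{t_j} (UC j k). Version 0 is the initial version
in which every node holds a result.\<close>

datatype 'n st = Res nat 'n | UC nat 'n

fun tstamp :: "'n st \<Rightarrow> nat" where
  "tstamp (Res j k) = j"
| "tstamp (UC j k) = j"

fun is_uc :: "'n st \<Rightarrow> bool" where
  "is_uc (Res j k) = False"
| "is_uc (UC j k) = True"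

fun is_res :: "'n st \<Rightarrow> bool" where
  "is_res (Res j k) = True"
| "is_res (UC j k) = False"

text \<open>Write transactions w^{t_1},...,w^{t_n} (indices 1..nw). Transaction i
starts (creates version G^{t_i}) at time wstart i, updates the node set upd i,
and the new result of node k \<in> upd i is computed at time ctime i k.
Read transactions r^{s_1},...,r^{s_m} are indexed 0..nr-1; read i happens
(and returns) at time rtime i and reads the viewport vport i.\<close>

record 'n writes =
  nw :: nat
  wstart :: "nat \<Rightarrow> real"
  upd :: "nat \<Rightarrow> 'n set"
  ctime :: "nat \<Rightarrow> 'n \<Rightarrow> real"

record 'n reads =
  nr :: nat
  rtime :: "nat \<Rightarrow> real"
  vport :: "nat \<Rightarrow> 'n set"

fun state :: "'n writes \<Rightarrow> nat \<Rightarrow> 'n \<Rightarrow> real \<Rightarrow> 'n st" where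
  "state W 0 k \<tau> = Res 0 k"
| "state W (Suc i) k \<tau> =
     (if k \<in> upd W (Suc i) then
        (if ctime W (Suc i) k \<le> \<tau> then Res (Suc i) k else UC (Suc i) k)
      else state W i k \<tau>)"

definition latest :: "'n writes \<Rightarrow> real \<Rightarrow> nat" where
  "latest W \<tau> = Max {i. i \<le> nw W \<and> (i = 0 \<or> wstart W i \<le> \<tau>)}"

definition committed :: "'n writes \<Rightarrow> nat \<Rightarrow> real \<Rightarrow> bool" where
  "committed W i \<tau> = (\<forall>k \<in> upd W i. ctime W i k \<le> \<tau>)"

definition committed_ver :: "'n writes \<Rightarrow> real \<Rightarrow> nat" where
  "committed_ver W \<tau> = Max {i. i \<le> latest W \<tau> \<and> (i = 0 \<or> committed W i \<tau>)}"

definition ucs :: "'n writes \<Rightarrow> nat \<Rightarrow> 'n set \<Rightarrow> real \<Rightarrow> nat" where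
  "ucs W i A \<tau> = card {x \<in> A. is_uc (state W i x \<tau>)}"

datatype lens = GCNB | LCNB | LCMB

definition gcnb_choice :: "'n set \<Rightarrow> 'n writes \<Rightarrow> 'n reads \<Rightarrow> nat \<Rightarrow> nat \<Rightarrow> nat" where
  "gcnb_choice N W R k i =
     (let \<tau> = rtime R i in
      if ucs W (latest W \<tau>) N \<tau> \<le> k then latest W \<tau> else committed_ver W \<tau>)"

definition lcnb_choice :: "'n writes \<Rightarrow> 'n reads \<Rightarrow> nat \<Rightarrow> nat \<Rightarrow> nat" where
  "lcnb_choice W R k i =
     (let \<tau> = rtime R i in
      if ucs W (latest W \<tau>) (vport R i) \<tau> \<le> k then latest W \<tau> else committed_ver W \<tau>)"

text \<open>k-LCMB step, given h x = largest timestamp of node x read so far (0 if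
never read; all timestamps are \<ge> 0, so this is harmless).  Reading version g
preserves monotonicity iff no viewport node gets a smaller timestamp than h.\<close>
definition lcmb_step :: "'n writes \<Rightarrow> 'n reads \<Rightarrow> nat \<Rightarrow> ('n \<Rightarrow> nat) \<Rightarrow> nat \<Rightarrow> nat" where
  "lcmb_step W R k h i =
     (let \<tau> = rtime R i;
          pres = (\<lambda>g. \<forall>x \<in> vport R i. h x \<le> tstamp (state W g x \<tau>))
      in if pres (committed_ver W \<tau>) \<and> pres (latest W \<tau>) then lcnb_choice W R k i
         else latest W \<tau>)"

fun lcmb_hist :: "'n writes \<Rightarrow> 'n reads \<Rightarrow> nat \<Rightarrow> nat \<Rightarrow> 'n \<Rightarrow> nat" where
  "lcmb_hist W R k 0 = (\<lambda>x. 0)"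
| "lcmb_hist W R k (Suc i) =
     (\<lambda>x. if x \<in> vport R i
          then max (lcmb_hist W R k i x)
                   (tstamp (state W (lcmb_step W R k (lcmb_hist W R k i) i) x (rtime R i)))
          else lcmb_hist W R k i x)"

definition lcmb_choice :: "'n writes \<Rightarrow> 'n reads \<Rightarrow> nat \<Rightarrow> nat \<Rightarrow> nat" where
  "lcmb_choice W R k i = lcmb_step W R k (lcmb_hist W R k i) i"

fun choice :: "lens \<Rightarrow> nat \<Rightarrow> 'n set \<Rightarrow> 'n writes \<Rightarrow> 'n reads \<Rightarrow> nat \<Rightarrow> nat" where
  "choice GCNB k N W R i = gcnb_choice N W R k i"
| "choice LCNB k N W R i = lcnb_choice W R k i"
| "choice LCMB k N W R i = lcmb_choice W R k i"

definition H :: "lens \<Rightarrow> nat \<Rightarrow> 'n set \<Rightarrow> 'n writes \<Rightarrow> 'n reads \<Rightarrow> nat \<Rightarrow> 'n st set" where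
  "H L k N W R i = (\<lambda>x. state W (choice L k N W R i) x (rtime R i)) ` vport R i"

definition Vlatest :: "'n set \<Rightarrow> 'n writes \<Rightarrow> 'n reads \<Rightarrow> nat \<Rightarrow> 'n st set" where
  "Vlatest N W R i = (\<lambda>x. state W (latest W (rtime R i)) x (rtime R i)) ` N"

definition invisibility :: "lens \<Rightarrow> nat \<Rightarrow> 'n set \<Rightarrow> 'n writes \<Rightarrow> 'n reads \<Rightarrow> real" where
  "invisibility L k N W R =
     (\<Sum>i < nr R - 1. real (card {s \<in> H L k N W R i. is_uc s}) * (rtime R (Suc i) - rtime R i))"

definition staleness :: "lens \<Rightarrow> nat \<Rightarrow> 'n set \<Rightarrow> 'n writes \<Rightarrow> 'n reads \<Rightarrow> real" where
  "staleness L k N W R =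
     (\<Sum>i < nr R - 1. real (card {s \<in> H L k N W R i. is_res s \<and> s \<notin> Vlatest N W R i})
                      * (rtime R (Suc i) - rtime R i))"

text \<open>Well-formed scenario: N is the finite node set of a DAG E; writes start in
order, each write updates nodes of N and computes a result only after it starts;
write transactions are processed one at a time (all new results of an earlier
write are computed no later than any new result of a later write); reads occur
in time order and read viewports of nodes of N.\<close>
definition valid_panorama :: "'n set \<Rightarrow> ('n \<times> 'n) set \<Rightarrow> 'n writes \<Rightarrow> 'n reads \<Rightarrow> bool" where
  "valid_panorama N E W R \<longleftrightarrow>
     finite N \<and> E \<subseteq> N \<times> N \<and> acyclic E \<and>
     (\<forall>i j. 1 \<le> i \<longrightarrow> i < j \<longrightarrow> j \<le> nw W \<longrightarrow> wstart W i < wstart W j) \<and>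
     (\<forall>i. 1 \<le> i \<longrightarrow> i \<le> nw W \<longrightarrow> upd W i \<subseteq> N) \<and>
     (\<forall>i k. 1 \<le> i \<longrightarrow> i \<le> nw W \<longrightarrow> k \<in> upd W i \<longrightarrow> wstart W i \<le> ctime W i k) \<and>
     (\<forall>i j k k'. 1 \<le> i \<longrightarrow> i < j \<longrightarrow> j \<le> nw W \<longrightarrow> k \<in> upd W i \<longrightarrow> k' \<in> upd W j
          \<longrightarrow> ctime W i k \<le> ctime W j k') \<and>
     (\<forall>i j. i < j \<longrightarrow> j < nr R \<longrightarrow> rtime R i < rtime R j) \<and>
     (\<forall>i < nr R. vport R i \<subseteq> N)"

end

theory Submission
  imports Defs
begin

fun snode :: "'n st \<Rightarrow> 'n" where
  "snode (Res j k) = k"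
| "snode (UC j k) = k"

lemma snode_state: "snode (state W g x \<tau>) = x"
  by (induction g) auto

lemma uc_origin:
  "is_uc (state W i x \<tau>) \<Longrightarrow> \<exists>j. 1 \<le> j \<and> j \<le> i \<and> x \<in> upd W j \<and> \<tau> < ctime W j x"
proof (induction i)
  case 0 then show ?case by simp
next
  case (Suc i)
  show ?case
  proof (cases "x \<in> upd W (Suc i)")
    case True
    with Suc.prems have "\<not> ctime W (Suc i) x \<le> \<tau>" by (auto split: if_splits)
    with True show ?thesis by (intro exI[of _ "Suc i"]) auto
  next
    case False
    with Suc.prems Suc.IH show ?thesis by fastforce
  qed
qed

lemma uc_mono:
  assumes V: "valid_panorama N E W R"
  shows "is_uc (state W g x \<tau>) \<Longrightarrow> g \<le> g' \<Longrightarrow> g' \<le> nw W \<Longrightarrow> is_uc (state W g' x \<tau>)"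
proof (induction g')
  case 0 then show ?case by simp
next
  case (Suc i)
  show ?case
  proof (cases "g = Suc i")
    case True then show ?thesis using Suc by simp
  next
    case False
    then have gi: "g \<le> i" using Suc.prems by simp
    have IH: "is_uc (state W i x \<tau>)" using Suc gi by simp
    show ?thesis
    proof (cases "x \<in> upd W (Suc i)")
      case True
      obtain j where j: "1 \<le> j" "j \<le> i" "x \<in> upd W j" "\<tau> < ctime W j x"
        using uc_origin[OF IH] by blast
      have "ctime W j x \<le> ctime W (Suc i) x"
        using V j True Suc.prems(3) unfolding valid_panorama_def by auto
      with j True show ?thesis by simp
    next
      case False then show ?thesis using IH by simp
    qed
  qed
qed

lemma uc_card:
  assumes "finite A"
  shows "card {s \<in> (\<lambda>x. state W g x \<tau>) ` A. is_uc s} = card {x \<in> A. is_uc (state W g x \<tau>)}"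
proof -
  have eq: "{s \<in> (\<lambda>x. state W g x \<tau>) ` A. is_uc s} = (\<lambda>x. state W g x \<tau>) ` {x \<in> A. is_uc (state W g x \<tau>)}"
    by auto
  have "inj_on (\<lambda>x. state W g x \<tau>) {x \<in> A. is_uc (state W g x \<tau>)}"
    by (rule inj_on_inverseI[where g = snode]) (simp add: snode_state)
  then show ?thesis unfolding eq by (rule card_image)
qed

lemma latest_le: "latest W \<tau> \<le> nw W"
proof -
  have "finite {i. i \<le> nw W \<and> (i = 0 \<or> wstart W i \<le> \<tau>)}" by simp
  moreover have "{i. i \<le> nw W \<and> (i = 0 \<or> wstart W i \<le> \<tau>)} \<noteq> {}" by auto
  ultimately show ?thesis unfolding latest_def by (simp)
qed

lemma committed_le: "committed_ver W \<tau> \<le> latest W \<tau>"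
proof -
  have "finite {i. i \<le> latest W \<tau> \<and> (i = 0 \<or> committed W i \<tau>)}" by simp
  moreover have "{i. i \<le> latest W \<tau> \<and> (i = 0 \<or> committed W i \<tau>)} \<noteq> {}" by auto
  ultimately show ?thesis unfolding committed_ver_def by simp
qed

lemma choice_cases:
  "choice L k N W R i = latest W (rtime R i) \<or> choice L k N W R i = committed_ver W (rtime R i)"
  by (cases L) (auto simp: gcnb_choice_def lcnb_choice_def lcmb_choice_def lcmb_step_def Let_def)

lemma cmp:
  assumes V: "valid_panorama N E W R" and i: "i < nr R"
    and imp: "choice B k N W R i = latest W (rtime R i) \<longrightarrow> choice A k N W R i = latest W (rtime R i)"
  shows "card {s \<in> H B k N W R i. is_uc s} \<le> card {s \<in> H A k N W R i. is_uc s}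
       \<and> card {s \<in> H A k N W R i. is_res s \<and> s \<notin> Vlatest N W R i}
         \<le> card {s \<in> H B k N W R i. is_res s \<and> s \<notin> Vlatest N W R i}"
proof -
  define \<tau> where "\<tau> = rtime R i"
  define Lv where "Lv = latest W \<tau>"
  define Cv where "Cv = committed_ver W \<tau>"
  have vN: "vport R i \<subseteq> N" and fN: "finite N" using V i unfolding valid_panorama_def by auto
  have fv: "finite (vport R i)" using vN fN finite_subset by blast
  define uc where "uc g = card {s \<in> (\<lambda>x. state W g x \<tau>) ` vport R i. is_uc s}" for g
  define sc where "sc g = card {s \<in> (\<lambda>x. state W g x \<tau>) ` vport R i. is_res s \<and> s \<notin> Vlatest N W R i}" for g
  have ucH: "card {s \<in> H L k N W R i. is_uc s} = uc (choice L k N W R i)" for L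
    unfolding uc_def H_def \<tau>_def ..
  have scH: "card {s \<in> H L k N W R i. is_res s \<and> s \<notin> Vlatest N W R i} = sc (choice L k N W R i)" for L
    unfolding sc_def H_def \<tau>_def ..
  have sL: "sc Lv = 0"
  proof -
    have "{s \<in> (\<lambda>x. state W Lv x \<tau>) ` vport R i. is_res s \<and> s \<notin> Vlatest N W R i} = {}"
      using vN unfolding Vlatest_def Lv_def \<tau>_def by auto
    then show ?thesis unfolding sc_def by (metis card.empty)
  qed
  have uCL: "uc Cv \<le> uc Lv"
  proof -
    have "{x \<in> vport R i. is_uc (state W Cv x \<tau>)} \<subseteq> {x \<in> vport R i. is_uc (state W Lv x \<tau>)}"
      using uc_mono[OF V] committed_le latest_le unfolding Cv_def Lv_def by blast
    then show ?thesis unfolding uc_def using uc_card[OF fv] card_mono fv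
      by (metis (no_types, lifting) finite_subset mem_Collect_eq subsetI)
  qed
  have cA: "choice A k N W R i = Lv \<or> choice A k N W R i = Cv"
    and cB: "choice B k N W R i = Lv \<or> choice B k N W R i = Cv"
    using choice_cases unfolding Lv_def Cv_def \<tau>_def by blast+
  have imp': "choice B k N W R i = Lv \<longrightarrow> choice A k N W R i = Lv"
    using imp unfolding Lv_def \<tau>_def .
  show ?thesis unfolding ucH scH
    using cA cB imp' sL uCL by auto
qed

theorem theorem2p12:
  fixes N :: "'n set" and E :: "('n \<times> 'n) set" and W :: "'n writes" and R :: "'n reads"
    and k :: nat
  assumes "valid_panorama N E W R"
  shows "staleness LCMB k N W R \<le> staleness LCNB k N W R
       \<and> staleness LCNB k N W R \<le> staleness GCNB k N W R
       \<and> invisibility LCMB k N W R \<ge> invisibility LCNB k N W R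
       \<and> invisibility LCNB k N W R \<ge> invisibility GCNB k N W R"
proof -
  have V: "valid_panorama N E W R" by fact
  have dt: "0 \<le> rtime R (Suc i) - rtime R i" if "i < nr R - 1" for i
    using V that unfolding valid_panorama_def by (auto intro: less_imp_le)
  have G2L: "choice GCNB k N W R i = latest W (rtime R i) \<longrightarrow> choice LCNB k N W R i = latest W (rtime R i)"
    if "i < nr R" for i
  proof
    assume a: "choice GCNB k N W R i = latest W (rtime R i)"
    have vN: "vport R i \<subseteq> N" and fN: "finite N" using V that unfolding valid_panorama_def by auto
    have le: "ucs W (latest W (rtime R i)) (vport R i) (rtime R i) \<le> ucs W (latest W (rtime R i)) N (rtime R i)"
      unfolding ucs_def using vN fN by (intro card_mono) auto
    show "choice LCNB k N W R i = latest W (rtime R i)"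
    proof (cases "ucs W (latest W (rtime R i)) N (rtime R i) \<le> k")
      case True then show ?thesis using le by (simp add: lcnb_choice_def Let_def)
    next
      case False
      then have "committed_ver W (rtime R i) = latest W (rtime R i)"
        using a by (simp add: gcnb_choice_def Let_def)
      then show ?thesis by (simp add: lcnb_choice_def Let_def)
    qed
  qed
  have L2M: "choice LCNB k N W R i = latest W (rtime R i) \<longrightarrow> choice LCMB k N W R i = latest W (rtime R i)" for i
    by (simp add: lcmb_choice_def lcmb_step_def Let_def)
  have c1: "card {s \<in> H LCNB k N W R i. is_uc s} \<le> card {s \<in> H LCMB k N W R i. is_uc s}
       \<and> card {s \<in> H LCMB k N W R i. is_res s \<and> s \<notin> Vlatest N W R i}
         \<le> card {s \<in> H LCNB k N W R i. is_res s \<and> s \<notin> Vlatest N W R i}" if "i < nr R - 1" for i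
    using cmp[OF V _ L2M] that by simp
  have c2: "card {s \<in> H GCNB k N W R i. is_uc s} \<le> card {s \<in> H LCNB k N W R i. is_uc s}
       \<and> card {s \<in> H LCNB k N W R i. is_res s \<and> s \<notin> Vlatest N W R i}
         \<le> card {s \<in> H GCNB k N W R i. is_res s \<and> s \<notin> Vlatest N W R i}" if "i < nr R - 1" for i
    using cmp[OF V _ G2L] that by simp
  show ?thesis
    unfolding staleness_def invisibility_def
    using c1 c2 dt
    by (intro conjI sum_mono mult_right_mono; simp)
qed

end
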